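(* Let $r\ge 1$ and let $G$ be an $r$-regular graph of order $n$. Then $\mathrm{LIF}(G)\ge \frac{2}{r+1}\,n$. Moreover, the bound is sharp: for the complete graph $K_{r+1}$ (which is $r$-regular of order $r+1$) one has $\mathrm{LIF}(K_{r+1})=2=\frac{2}{r+1}(r+1)$.
   Context: All graphs are finite and simple. A linear forest is a forest each of whose connected components is a path (a single vertex counts as a path). For a graph $G$, $\mathrm{LIF}(G)$ denotes the maximum number of vertices of an induced subgraph of $G$ that is a linear forest. The order of a graph is its number of vertices. *)

theory Defs
  imports Complex_Main
begin

definition simple_graph :: "'a set \<Rightarrow> ('a \<Rightarrow> 'a \<Rightarrow> bool) \<Rightarrow> bool" where
  "simple_graph V E \<longleftrightarrow> finite V \<and> (\<forall>x y. E x y \<longrightarrow> x \<in> V \<and> y \<in> V)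
     \<and> (\<forall>x y. E x y \<longrightarrow> E y x) \<and> (\<forall>x. \<not> E x x)"

definition degree :: "'a set \<Rightarrow> ('a \<Rightarrow> 'a \<Rightarrow> bool) \<Rightarrow> 'a \<Rightarrow> nat" where
  "degree V E v = card {u \<in> V. E v u}"

definition regular :: "'a set \<Rightarrow> ('a \<Rightarrow> 'a \<Rightarrow> bool) \<Rightarrow> nat \<Rightarrow> bool" where
  "regular V E r \<longleftrightarrow> (\<forall>v\<in>V. degree V E v = r)"

definition component :: "'a set \<Rightarrow> ('a \<Rightarrow> 'a \<Rightarrow> bool) \<Rightarrow> 'a \<Rightarrow> 'a set" where
  "component S E v = {u. (v, u) \<in> {(x, y). x \<in> S \<and> y \<in> S \<and> E x y}\<^sup>*}"

definition is_path_graph :: "'a set \<Rightarrow> ('a \<Rightarrow> 'a \<Rightarrow> bool) \<Rightarrow> bool" where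
  "is_path_graph C E \<longleftrightarrow> (\<exists>xs. xs \<noteq> [] \<and> distinct xs \<and> set xs = C \<and>
     (\<forall>i<length xs. \<forall>j<length xs. E (xs ! i) (xs ! j) \<longleftrightarrow> (i + 1 = j \<or> j + 1 = i)))"

definition induced_linear_forest :: "'a set \<Rightarrow> ('a \<Rightarrow> 'a \<Rightarrow> bool) \<Rightarrow> bool" where
  "induced_linear_forest S E \<longleftrightarrow> (\<forall>v\<in>S. is_path_graph (component S E v) E)"

definition LIF :: "'a set \<Rightarrow> ('a \<Rightarrow> 'a \<Rightarrow> bool) \<Rightarrow> nat" where
  "LIF V E = Max {card S | S. S \<subseteq> V \<and> induced_linear_forest S E}"

end

theory Submission
  imports Defs
begin


definition rel :: "'a set \<Rightarrow> ('a \<Rightarrow> 'a \<Rightarrow> bool) \<Rightarrow> ('a \<times> 'a) set" where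
  "rel S E = {(x, y). x \<in> S \<and> y \<in> S \<and> E x y}"

lemma component_rel: "component S E v = {u. (v,u) \<in> (rel S E)\<^sup>*}"
  unfolding component_def rel_def by simp

lemma comp_self: "v \<in> component S E v" by (simp add: component_rel)

lemma rel_sym_rtrancl:
  assumes sym: "\<forall>x y. E x y \<longrightarrow> E y x" and "(u,v) \<in> (rel S E)\<^sup>*"
  shows "(v,u) \<in> (rel S E)\<^sup>*"
  using assms(2)
proof (induction rule: rtrancl_induct)
  case base thus ?case by simp
next
  case (step y z)
  hence "(z,y) \<in> rel S E" using sym by (auto simp: rel_def)
  thus ?case using step.IH by (rule converse_rtrancl_into_rtrancl)
qed

lemma rtrancl_closed:
  assumes "(u,v) \<in> R\<^sup>*" "u \<in> X" "\<forall>x y. x \<in> X \<longrightarrow> (x,y) \<in> R \<longrightarrow> y \<in> X"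
  shows "v \<in> X"
  using assms by (induction rule: rtrancl_induct) auto

lemma comp_subset: "u \<in> S \<Longrightarrow> component S E u \<subseteq> S"
proof
  fix x assume "u \<in> S" "x \<in> component S E u"
  thus "x \<in> S" unfolding component_rel
    by (auto intro: rtrancl_closed[where X=S] simp: rel_def)
qed

lemma comp_eq:
  assumes sym: "\<forall>x y. E x y \<longrightarrow> E y x" and "v \<in> component S E u"
  shows "component S E v = component S E u"
proof -
  have uv: "(u,v) \<in> (rel S E)\<^sup>*" using assms(2) by (simp add: component_rel)
  hence vu: "(v,u) \<in> (rel S E)\<^sup>*" using rel_sym_rtrancl[OF sym] by blast
  show ?thesis unfolding component_rel
    using uv vu by (auto intro: rtrancl_trans)
qed

definition pathlist :: "('a \<Rightarrow> 'a \<Rightarrow> bool) \<Rightarrow> 'a list \<Rightarrow> bool" where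
  "pathlist E xs \<longleftrightarrow> xs \<noteq> [] \<and> distinct xs \<and>
     (\<forall>i<length xs. \<forall>j<length xs. E (xs ! i) (xs ! j) \<longleftrightarrow> (i + 1 = j \<or> j + 1 = i))"

lemma is_path_graph_iff: "is_path_graph C E \<longleftrightarrow> (\<exists>xs. pathlist E xs \<and> set xs = C)"
  unfolding is_path_graph_def pathlist_def by blast

lemma pathlist_rev:
  assumes "pathlist E xs" shows "pathlist E (rev xs)"
proof -
  let ?n = "length xs"
  have "E (rev xs ! i) (rev xs ! j) \<longleftrightarrow> (i + 1 = j \<or> j + 1 = i)" if "i < ?n" "j < ?n" for i j
  proof -
    have "E (rev xs ! i) (rev xs ! j) \<longleftrightarrow> E (xs ! (?n - Suc i)) (xs ! (?n - Suc j))"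
      using that by (simp add: rev_nth)
    also have "\<dots> \<longleftrightarrow> (?n - Suc i + 1 = ?n - Suc j \<or> ?n - Suc j + 1 = ?n - Suc i)"
      using assms that unfolding pathlist_def by auto
    also have "\<dots> \<longleftrightarrow> (i + 1 = j \<or> j + 1 = i)" using that by arith
    finally show ?thesis .
  qed
  thus ?thesis using assms unfolding pathlist_def by auto
qed

lemma pathlist_endpoint:
  assumes p: "pathlist E xs" and i: "i < length xs"
    and c: "card {y \<in> set xs. E (xs ! i) y} \<le> 1"
  shows "i = 0 \<or> i = length xs - 1"
proof (rule ccontr)
  assume "\<not> (i = 0 \<or> i = length xs - 1)"
  hence i1: "0 < i" "i + 1 < length xs" using i by auto
  have e1: "E (xs ! i) (xs ! (i - 1))" using p i1 unfolding pathlist_def by auto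
  have e2: "E (xs ! i) (xs ! (i + 1))" using p i1 unfolding pathlist_def by auto
  have ne: "xs ! (i - 1) \<noteq> xs ! (i + 1)"
    using p i1 unfolding pathlist_def by (simp add: nth_eq_iff_index_eq)
  have "{xs ! (i - 1), xs ! (i + 1)} \<subseteq> {y \<in> set xs. E (xs ! i) y}"
    using e1 e2 i1 by auto
  hence "card {xs ! (i - 1), xs ! (i + 1)} \<le> card {y \<in> set xs. E (xs ! i) y}"
    by (intro card_mono) auto
  thus False using ne c by simp
qed

lemma pathlist_snoc:
  assumes p: "pathlist E ys" and lw: "last ys = w" and zn: "z \<notin> set ys"
    and ezw: "E z w" and only: "\<forall>y\<in>set ys. E z y \<longrightarrow> y = w"
    and sym: "\<forall>x y. E x y \<longrightarrow> E y x" and irr: "\<forall>x. \<not> E x x"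
  shows "pathlist E (ys @ [z])"
proof -
  let ?n = "length ys"
  have n: "?n \<ge> 1" using p unfolding pathlist_def by (cases ys) auto
  have wn: "w = ys ! (?n - 1)" using lw p unfolding pathlist_def by (simp add: last_conv_nth)
  have dist: "distinct ys" using p unfolding pathlist_def by auto
  have zj: "E z (ys ! j) \<longleftrightarrow> j + 1 = ?n" if "j < ?n" for j
  proof
    assume "E z (ys ! j)"
    hence "ys ! j = w" using only that by auto
    hence "j = ?n - 1" using wn dist that n by (simp add: nth_eq_iff_index_eq)
    thus "j + 1 = ?n" using n by simp
  next
    assume "j + 1 = ?n"
    hence "j = ?n - 1" by simp
    hence "ys ! j = w" using wn by simp
    thus "E z (ys ! j)" using ezw by simp
  qed
  have "E ((ys @ [z]) ! i) ((ys @ [z]) ! j) \<longleftrightarrow> (i + 1 = j \<or> j + 1 = i)"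
    if "i < Suc ?n" "j < Suc ?n" for i j
  proof (cases "i < ?n")
    case True
    show ?thesis
    proof (cases "j < ?n")
      case True
      thus ?thesis using \<open>i < ?n\<close> p unfolding pathlist_def by (simp add: nth_append)
    next
      case False
      hence "j = ?n" using that by simp
      thus ?thesis using \<open>i < ?n\<close> zj[of i] sym by (auto simp: nth_append)
    qed
  next
    case False
    hence ii: "i = ?n" using that by simp
    show ?thesis
    proof (cases "j < ?n")
      case True
      thus ?thesis using ii zj[of j] by (auto simp: nth_append)
    next
      case False
      hence "j = ?n" using that by simp
      thus ?thesis using ii irr by (simp add: nth_append)
    qed
  qed
  thus ?thesis using dist zn unfolding pathlist_def by auto
qed


lemma single_path: "is_path_graph {z} E \<longleftrightarrow> \<not> E z z"
  unfolding is_path_graph_def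
proof
  assume "\<exists>xs. xs \<noteq> [] \<and> distinct xs \<and> set xs = {z} \<and>
     (\<forall>i<length xs. \<forall>j<length xs. E (xs ! i) (xs ! j) = (i + 1 = j \<or> j + 1 = i))"
  then obtain xs where "xs \<noteq> []" "set xs = {z}" "\<forall>i<length xs. \<forall>j<length xs. E (xs ! i) (xs ! j) = (i + 1 = j \<or> j + 1 = i)" by blast
  moreover have "xs ! 0 = z" using \<open>xs \<noteq> []\<close> \<open>set xs = {z}\<close> by (metis insertI1 length_greater_0_conv nth_mem singletonD)
  ultimately show "\<not> E z z" by (metis add_is_0 length_greater_0_conv one_neq_zero)
next
  assume "\<not> E z z"
  thus "\<exists>xs. xs \<noteq> [] \<and> distinct xs \<and> set xs = {z} \<and>
     (\<forall>i<length xs. \<forall>j<length xs. E (xs ! i) (xs ! j) = (i + 1 = j \<or> j + 1 = i))"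
    by (intro exI[of _ "[z]"]) auto
qed

lemma extend:
  assumes sym: "\<forall>x y. E x y \<longrightarrow> E y x" and irr: "\<forall>x. \<not> E x x"
    and fin: "finite T" and lf: "induced_linear_forest T E" and zT: "z \<notin> T"
    and c1: "card {y\<in>T. E z y} \<le> 1"
    and c2: "\<forall>w\<in>T. E z w \<longrightarrow> card {y\<in>T. E w y} \<le> 1"
  shows "induced_linear_forest (insert z T) E"
proof (cases "{y\<in>T. E z y} = {}")
  case True
  have R: "rel (insert z T) E = rel T E"
    using True irr sym zT unfolding rel_def by auto
  have cz: "component T E z = {z}"
  proof -
    have "u = z" if "(z,u) \<in> (rel T E)\<^sup>*" for u
      using that by (rule converse_rtranclE) (use zT in \<open>auto simp: rel_def\<close>)
    thus ?thesis using comp_self[of z T E] unfolding component_rel by auto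
  qed
  show ?thesis
    unfolding induced_linear_forest_def
  proof
    fix v assume "v \<in> insert z T"
    have ceq: "component (insert z T) E v = component T E v"
      unfolding component_rel R ..
    show "is_path_graph (component (insert z T) E v) E"
    proof (cases "v = z")
      case True
      thus ?thesis using ceq cz irr by (simp add: single_path)
    next
      case False
      hence "v \<in> T" using \<open>v \<in> insert z T\<close> by simp
      thus ?thesis using ceq lf unfolding induced_linear_forest_def by simp
    qed
  qed
next
  case False
  then obtain w where wT: "w \<in> T" and zw: "E z w" by auto
  have only: "\<forall>y\<in>T. E z y \<longrightarrow> y = w"
  proof (intro ballI impI)
    fix y assume "y \<in> T" "E z y"
    have "finite {y\<in>T. E z y}" using fin by simp
    thus "y = w" using c1 card_le_Suc0_iff_eq[of "{y\<in>T. E z y}"] \<open>y \<in> T\<close> \<open>E z y\<close> wT zw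
      by auto
  qed
  define C where "C = component T E w"
  define R where "R = rel T E"
  define R' where "R' = rel (insert z T) E"
  have R'eq: "R' = R \<union> {(z,w),(w,z)}"
  proof (intro set_eqI iffI)
    fix p assume "p \<in> R'"
    then obtain a b where p: "p = (a,b)" "a \<in> insert z T" "b \<in> insert z T" "E a b"
      unfolding R'_def rel_def by blast
    show "p \<in> R \<union> {(z,w),(w,z)}"
    proof (cases "a = z")
      case True
      hence "b \<in> T" using p irr zT by auto
      hence "b = w" using only p True by blast
      thus ?thesis using p True by simp
    next
      case a: False
      show ?thesis
      proof (cases "b = z")
        case True
        hence "a \<in> T" "E z a" using p a sym by auto
        hence "a = w" using only by blast
        thus ?thesis using p True by simp
      next
        case False
        thus ?thesis using p a unfolding R_def rel_def by simp
      qed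
    qed
  next
    fix p assume "p \<in> R \<union> {(z,w),(w,z)}"
    thus "p \<in> R'" unfolding R_def R'_def rel_def using zw wT sym by auto
  qed
  have CT: "C \<subseteq> T" unfolding C_def by (rule comp_subset[OF wT])
  have wC: "w \<in> C" unfolding C_def by (rule comp_self)
  have "is_path_graph C E" using lf wT unfolding induced_linear_forest_def C_def by (rule bspec)
  then obtain xs where xs: "pathlist E xs" "set xs = C" unfolding is_path_graph_iff by (elim exE conjE)
  have "w \<in> set xs" using wC unfolding xs(2) .
  then obtain i where i: "i < length xs" "xs ! i = w" unfolding in_set_conv_nth by (elim exE conjE)
  have "card {y \<in> set xs. E (xs ! i) y} \<le> card {y\<in>T. E w y}"
    using i xs(2) CT fin by (intro card_mono) auto
  moreover have "card {y\<in>T. E w y} \<le> 1" using c2 wT zw by blast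
  ultimately have "card {y \<in> set xs. E (xs ! i) y} \<le> 1" by linarith
  hence "i = 0 \<or> i = length xs - 1" by (rule pathlist_endpoint[OF xs(1) i(1)])
  then obtain ys where ys: "pathlist E ys" "set ys = C" "last ys = w"
  proof (elim disjE)
    assume "i = 0"
    hence "last (rev xs) = w" using i xs(1) unfolding pathlist_def by (simp add: last_rev hd_conv_nth)
    thus ?thesis using pathlist_rev[OF xs(1)] xs(2) by (intro that[of "rev xs"]) auto
  next
    assume "i = length xs - 1"
    hence "last xs = w" using i xs(1) unfolding pathlist_def by (simp add: last_conv_nth)
    thus ?thesis using xs by (intro that[of xs]) auto
  qed
  have zC: "z \<notin> C" using CT zT by auto
  have zn: "z \<notin> set ys" using ys(2) zC by simp
  have oy: "\<forall>y\<in>set ys. E z y \<longrightarrow> y = w" using only CT ys(2) by blast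
  have pz: "pathlist E (ys @ [z])" by (rule pathlist_snoc[OF ys(1) ys(3) zn zw oy sym irr])
  have Rmono: "R\<^sup>* \<subseteq> R'\<^sup>*" using R'eq by (intro rtrancl_mono) blast
  have clos1: "\<forall>x y. x \<in> insert z C \<longrightarrow> (x,y) \<in> R' \<longrightarrow> y \<in> insert z C"
  proof (intro allI impI)
    fix x y assume x: "x \<in> insert z C" and xy: "(x,y) \<in> R'"
    show "y \<in> insert z C"
    proof (cases "(x,y) \<in> R")
      case True
      hence "x \<noteq> z" using zT unfolding R_def rel_def by auto
      hence "x \<in> C" using x by simp
      hence "(w,x) \<in> R\<^sup>*" unfolding C_def component_rel R_def by simp
      hence "(w,y) \<in> R\<^sup>*" using True by (rule rtrancl_into_rtrancl)
      thus ?thesis unfolding C_def component_rel R_def by simp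
    next
      case False
      hence "(x,y) = (z,w) \<or> (x,y) = (w,z)" using xy R'eq by simp
      thus ?thesis using wC by auto
    qed
  qed
  have compz: "component (insert z T) E z = insert z C"
  proof
    show "component (insert z T) E z \<subseteq> insert z C"
    proof
      fix u assume "u \<in> component (insert z T) E z"
      hence "(z,u) \<in> R'\<^sup>*" unfolding component_rel R'_def by simp
      thus "u \<in> insert z C" by (rule rtrancl_closed[OF _ _ clos1]) simp
    qed
  next
    show "insert z C \<subseteq> component (insert z T) E z"
    proof
      fix u assume u: "u \<in> insert z C"
      show "u \<in> component (insert z T) E z"
      proof (cases "u = z")
        case True thus ?thesis by (simp add: comp_self)
      next
        case False
        hence "u \<in> C" using u by simp
        hence "(w,u) \<in> R\<^sup>*" unfolding C_def component_rel R_def by simp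
        hence wu: "(w,u) \<in> R'\<^sup>*" using Rmono by (rule subsetD[rotated])
        have "(z,w) \<in> R'" using R'eq by simp
        hence "(z,u) \<in> R'\<^sup>*" using wu by (rule converse_rtrancl_into_rtrancl)
        thus ?thesis unfolding component_rel R'_def by simp
      qed
    qed
  qed
  show ?thesis
    unfolding induced_linear_forest_def
  proof
    fix v assume v: "v \<in> insert z T"
    show "is_path_graph (component (insert z T) E v) E"
    proof (cases "v \<in> insert z C")
      case True
      hence "v \<in> component (insert z T) E z" using compz by simp
      hence "component (insert z T) E v = component (insert z T) E z"
        by (rule comp_eq[OF sym])
      hence "component (insert z T) E v = set (ys @ [z])" using compz ys(2) by simp
      thus ?thesis using pz unfolding is_path_graph_iff by blast
    next
      case False
      hence vT: "v \<in> T" "v \<notin> C" using v by auto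
      have cvT: "component T E v \<subseteq> T" by (rule comp_subset[OF vT(1)])
      have clos2: "\<forall>x y. x \<in> component T E v \<longrightarrow> (x,y) \<in> R' \<longrightarrow> y \<in> component T E v"
      proof (intro allI impI)
        fix x y assume x: "x \<in> component T E v" and xy: "(x,y) \<in> R'"
        have xT: "x \<in> T" using cvT x by (rule subsetD)
        have "x \<noteq> w"
        proof
          assume "x = w"
          hence "w \<in> component T E v" using x by simp
          hence "component T E w = component T E v" by (rule comp_eq[OF sym])
          thus False using vT(2) comp_self[of v T E] unfolding C_def by simp
        qed
        hence "(x,y) \<in> R" using xy R'eq xT zT by auto
        moreover have "(v,x) \<in> R\<^sup>*" using x unfolding component_rel R_def by simp
        ultimately have "(v,y) \<in> R\<^sup>*" by simp
        thus "y \<in> component T E v" unfolding component_rel R_def by simp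
      qed
      have "component (insert z T) E v = component T E v"
      proof
        show "component T E v \<subseteq> component (insert z T) E v"
          using Rmono unfolding component_rel R_def R'_def by blast
      next
        show "component (insert z T) E v \<subseteq> component T E v"
        proof
          fix u assume "u \<in> component (insert z T) E v"
          hence "(v,u) \<in> R'\<^sup>*" unfolding component_rel R'_def by simp
          thus "u \<in> component T E v" by (rule rtrancl_closed[OF _ _ clos2]) (rule comp_self)
        qed
      qed
      thus ?thesis using lf vT unfolding induced_linear_forest_def by simp
    qed
  qed
qed


lemma lf_empty: "induced_linear_forest {} E"
  unfolding induced_linear_forest_def by simp

lemma ext1:
  assumes sym: "\<forall>x y. E x y \<longrightarrow> E y x" and irr: "\<forall>x. \<not> E x x"
    and finA: "finite A" and TA: "T \<subseteq> A" and lf: "induced_linear_forest T E"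
    and zA: "z \<in> A" and zT: "z \<notin> T"
    and d2: "\<forall>x\<in>A. card {y\<in>A. E x y} \<le> 2"
    and hz: "card {y\<in>A. E z y} \<le> 1 \<or> (\<exists>p\<in>A. p \<notin> T \<and> p \<noteq> z \<and> E z p)"
  shows "induced_linear_forest (insert z T) E"
proof (rule extend[OF sym irr _ lf zT])
  show finT: "finite T" using finA TA by (rule finite_subset[rotated])
  show "card {y\<in>T. E z y} \<le> 1"
    using hz
  proof
    assume h: "card {y\<in>A. E z y} \<le> 1"
    have "card {y\<in>T. E z y} \<le> card {y\<in>A. E z y}" using TA finA by (intro card_mono) auto
    thus ?thesis using h by linarith
  next
    assume "\<exists>p\<in>A. p \<notin> T \<and> p \<noteq> z \<and> E z p"
    then obtain p where p: "p \<in> A" "p \<notin> T" "E z p" by blast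
    have "card {y\<in>T. E z y} \<le> card ({y\<in>A. E z y} - {p})" using TA finA p by (intro card_mono) auto
    also have "\<dots> = card {y\<in>A. E z y} - 1" using p finA by (simp add: card_Diff_singleton)
    finally show ?thesis using d2 zA by fastforce
  qed
  show "\<forall>w\<in>T. E z w \<longrightarrow> card {y\<in>T. E w y} \<le> 1"
  proof (intro ballI impI)
    fix w assume w: "w \<in> T" "E z w"
    have wA: "w \<in> A" using w TA by blast
    have "card {y\<in>T. E w y} \<le> card ({y\<in>A. E w y} - {z})" using TA finA zT by (intro card_mono) auto
    also have "\<dots> = card {y\<in>A. E w y} - 1" using zA w sym finA by (simp add: card_Diff_singleton)
    finally show "card {y\<in>T. E w y} \<le> 1" using d2 wA by fastforce
  qed
qed

lemma delta1:
  assumes sym: "\<forall>x y. E x y \<longrightarrow> E y x" and irr: "\<forall>x. \<not> E x x"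
    and finB: "finite B" and d1: "\<forall>x\<in>B. card {y\<in>B. E x y} \<le> 1"
  shows "induced_linear_forest B E"
proof -
  have d2: "\<forall>x\<in>B. card {y\<in>B. E x y} \<le> 2" using d1 by fastforce
  have "T \<subseteq> B \<Longrightarrow> induced_linear_forest T E" for T
  proof -
    assume TB: "T \<subseteq> B"
    have "finite T" using finB TB by (rule finite_subset[rotated])
    thus ?thesis using TB
    proof (induction T rule: finite_induct)
      case empty show ?case by (rule lf_empty)
    next
      case (insert z T)
      show ?case
        by (rule ext1[OF sym irr finB _ insert.IH]) (use insert d1 d2 in auto)
    qed
  qed
  thus ?thesis by simp
qed


lemma delta2:
  assumes sym: "\<forall>x y. E x y \<longrightarrow> E y x" and irr: "\<forall>x. \<not> E x x"
  shows "finite A \<Longrightarrow> (\<forall>x\<in>A. card {y\<in>A. E x y} \<le> 2) \<Longrightarrow>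
         \<exists>S\<subseteq>A. induced_linear_forest S E \<and> 2 * card A \<le> 3 * card S"
proof (induction A rule: finite_psubset_induct)
  case (psubset A)
  note finA = psubset.hyps(1)
  note d2 = psubset.prems
  have d2sub: "\<forall>x\<in>A'. card {y\<in>A'. E x y} \<le> 2" if "A' \<subseteq> A" for A'
  proof
    fix x assume "x \<in> A'"
    have "card {y\<in>A'. E x y} \<le> card {y\<in>A. E x y}" using that finA by (intro card_mono) auto
    thus "card {y\<in>A'. E x y} \<le> 2" using d2 \<open>x \<in> A'\<close> that by fastforce
  qed
  show ?case
  proof (cases "A = {}")
    case True
    thus ?thesis using lf_empty by fastforce
  next
    case ne: False
    show ?thesis
    proof (cases "\<exists>v\<in>A. card {y\<in>A. E v y} \<le> 1")
      case True
      then obtain v where v: "v \<in> A" "card {y\<in>A. E v y} \<le> 1" by blast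
      have ps: "A - {v} \<subset> A" using v by blast
      have fs: "finite (A - {v})" using finA by simp
      have ds: "\<forall>x\<in>A - {v}. card {y\<in>A - {v}. E x y} \<le> 2" by (rule d2sub) blast
      obtain S where S: "S \<subseteq> A - {v}" "induced_linear_forest S E" "2 * card (A - {v}) \<le> 3 * card S"
        using psubset.IH[OF ps ds] by blast
      have lf: "induced_linear_forest (insert v S) E"
        by (rule ext1[OF sym irr finA _ S(2) v(1)]) (use S(1) d2 v in auto)
      have finS: "finite S" using S(1) finA by (meson finite_Diff finite_subset)
      have "v \<notin> S" using S(1) by blast
      hence "card (insert v S) = card S + 1" using finS by simp
      moreover have "card (A - {v}) = card A - 1" using v finA by simp
      moreover have "card A \<ge> 1" using v finA by (metis One_nat_def Suc_leI card_gt_0_iff empty_iff)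
      ultimately have "2 * card A \<le> 3 * card (insert v S)" using S(3) by linarith
      moreover have "insert v S \<subseteq> A" using S(1) v by blast
      ultimately show ?thesis using lf by blast
    next
      case False
      hence deg: "\<forall>v\<in>A. card {y\<in>A. E v y} \<ge> 2" by auto
      obtain v where vA: "v \<in> A" using ne by blast
      have "card {y\<in>A. E v y} \<ge> 2" using deg vA by blast
      then obtain u where u: "u \<in> A" "E v u" by (metis (no_types, lifting) card.empty empty_Collect_eq not_numeral_le_zero)
      have c2u: "card {y\<in>A. E u y} \<ge> 2" using deg u by blast
      have "\<exists>x\<in>A. E u x \<and> x \<noteq> v"
      proof (rule ccontr)
        assume "\<not> (\<exists>x\<in>A. E u x \<and> x \<noteq> v)"
        hence "{y\<in>A. E u y} \<subseteq> {v}" by blast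
        hence "card {y\<in>A. E u y} \<le> card {v}" by (intro card_mono) auto
        thus False using c2u by simp
      qed
      then obtain x where x: "x \<in> A" "E u x" "x \<noteq> v" by blast
      have uv: "u \<noteq> v" using u irr by auto
      have ux: "u \<noteq> x" using x irr by auto
      define A'' where "A'' = A - {v, u, x}"
      have ps: "A'' \<subset> A" unfolding A''_def using vA by blast
      have fs: "finite A''" using finA unfolding A''_def by simp
      have ds: "\<forall>x\<in>A''. card {y\<in>A''. E x y} \<le> 2" by (rule d2sub) (auto simp: A''_def)
      obtain S where S: "S \<subseteq> A''" "induced_linear_forest S E" "2 * card A'' \<le> 3 * card S"
        using psubset.IH[OF ps ds] by blast
      have SA: "S \<subseteq> A" using S(1) unfolding A''_def by blast
      have lf1: "induced_linear_forest (insert x S) E"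
        by (rule ext1[OF sym irr finA SA S(2) x(1)]) (use S(1) u x sym ux d2 in \<open>auto simp: A''_def\<close>)
      have lf2: "induced_linear_forest (insert u (insert x S)) E"
        by (rule ext1[OF sym irr finA _ lf1 u(1)]) (use S(1) SA u x sym ux uv vA d2 in \<open>auto simp: A''_def\<close>)
      have finS: "finite S" using SA finA by (rule finite_subset)
      have xS: "x \<notin> S" "u \<notin> S" using S(1) unfolding A''_def by auto
      have "card (insert u (insert x S)) = card S + 2" using xS finS ux by auto
      moreover have "card A'' = card A - 3" unfolding A''_def using vA u x uv ux finA by (simp add: card_Diff_subset)
      moreover have "card {v,u,x} = 3" using uv ux x by auto
      moreover have "card {v,u,x} \<le> card A" using vA u x finA by (intro card_mono) auto
      ultimately have "2 * card A \<le> 3 * card (insert u (insert x S))" using S(3) by linarith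
      moreover have "insert u (insert x S) \<subseteq> A" using SA u x by blast
      ultimately show ?thesis using lf2 by blast
    qed
  qed
qed


lemma LIF_ge:
  assumes fin: "finite V" and SV: "S \<subseteq> V" and lf: "induced_linear_forest S E"
  shows "card S \<le> LIF V E"
proof -
  have fs: "finite {card S |S. S \<subseteq> V \<and> induced_linear_forest S E}"
  proof (rule finite_subset[of _ "{..card V}"])
    show "{card S |S. S \<subseteq> V \<and> induced_linear_forest S E} \<subseteq> {..card V}"
      using fin by (auto intro: card_mono)
  qed simp
  have "card S \<in> {card S |S. S \<subseteq> V \<and> induced_linear_forest S E}" using SV lf by blast
  thus ?thesis unfolding LIF_def by (rule Max_ge[OF fs])
qed

lemma LIF_le:
  assumes fin: "finite V" and b: "\<forall>S. S \<subseteq> V \<and> induced_linear_forest S E \<longrightarrow> card S \<le> b"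
  shows "LIF V E \<le> b"
proof -
  have fs: "finite {card S |S. S \<subseteq> V \<and> induced_linear_forest S E}"
  proof (rule finite_subset[of _ "{..card V}"])
    show "{card S |S. S \<subseteq> V \<and> induced_linear_forest S E} \<subseteq> {..card V}"
      using fin by (auto intro: card_mono)
  qed simp
  have ne: "{card S |S. S \<subseteq> V \<and> induced_linear_forest S E} \<noteq> {}" using lf_empty by blast
  show ?thesis unfolding LIF_def
    by (rule Max.boundedI[OF fs ne]) (use b in blast)
qed

lemma card_partition_sum:
  fixes k :: nat
  assumes fin: "finite A" and g: "\<forall>x\<in>A. g x < k"
  shows "card A = (\<Sum>j<k. card {x\<in>A. g x = j})"
proof -
  have eq: "A = (\<Union>j\<in>{..<k}. {x\<in>A. g x = j})" using g by auto
  have "card A = card (\<Union>j\<in>{..<k}. {x\<in>A. g x = j})" using eq by (rule arg_cong)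
  also have "\<dots> = (\<Sum>j<k. card {x\<in>A. g x = j})"
    by (rule card_UN_disjoint) (use fin in auto)
  finally show ?thesis .
qed

lemma sum_if_const:
  assumes fin: "finite V"
  shows "(\<Sum>y\<in>V. if P y then c else (0::nat)) = c * card {y\<in>V. P y}"
proof -
  have "(\<Sum>y\<in>V. if P y then c else (0::nat)) = (\<Sum>y\<in>{y\<in>V. P y}. c)"
    by (rule sum.inter_filter[symmetric, OF fin])
  thus ?thesis by simp
qed

lemma phi_split:
  fixes w :: "nat \<Rightarrow> nat" and g :: "'a \<Rightarrow> nat"
  assumes fin: "finite V" and sym: "\<forall>x y. E x y \<longrightarrow> E y x" and irr: "\<forall>x. \<not> E x x" and v: "v \<in> V"
  shows "(\<Sum>x\<in>V. \<Sum>y\<in>V. if E x y \<and> g x = g y then w (g x) else 0) =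
         (\<Sum>x\<in>V-{v}. \<Sum>y\<in>V-{v}. if E x y \<and> g x = g y then w (g x) else 0)
           + 2 * (w (g v) * card {y\<in>V. E v y \<and> g y = g v})"
proof -
  define t where "t x y = (if E x y \<and> g x = g y then w (g x) else 0)" for x y
  define D where "D = card {y\<in>V. E v y \<and> g y = g v}"
  have row: "(\<Sum>y\<in>V. t v y) = w (g v) * D"
  proof -
    have "(\<Sum>y\<in>V. t v y) = (\<Sum>y\<in>V. if E v y \<and> g y = g v then w (g v) else 0)"
      unfolding t_def by (rule sum.cong) auto
    thus ?thesis unfolding D_def using sum_if_const[OF fin] by simp
  qed
  have col: "(\<Sum>x\<in>V-{v}. t x v) = w (g v) * D"
  proof -
    have "(\<Sum>x\<in>V. t x v) = t v v + (\<Sum>x\<in>V-{v}. t x v)" by (rule sum.remove[OF fin v])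
    moreover have "t v v = 0" unfolding t_def using irr by simp
    moreover have "(\<Sum>x\<in>V. t x v) = (\<Sum>y\<in>V. if E v y \<and> g y = g v then w (g v) else 0)"
      unfolding t_def by (rule sum.cong) (use sym in auto)
    ultimately show ?thesis unfolding D_def using sum_if_const[OF fin] by simp
  qed
  have "(\<Sum>x\<in>V. \<Sum>y\<in>V. t x y) = (\<Sum>y\<in>V. t v y) + (\<Sum>x\<in>V-{v}. \<Sum>y\<in>V. t x y)"
    by (rule sum.remove[OF fin v])
  also have "(\<Sum>x\<in>V-{v}. \<Sum>y\<in>V. t x y) = (\<Sum>x\<in>V-{v}. t x v + (\<Sum>y\<in>V-{v}. t x y))"
    by (rule sum.cong) (simp_all add: sum.remove[OF fin v])
  also have "\<dots> = (\<Sum>x\<in>V-{v}. t x v) + (\<Sum>x\<in>V-{v}. \<Sum>y\<in>V-{v}. t x y)"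
    by (rule sum.distrib)
  finally have "(\<Sum>x\<in>V. \<Sum>y\<in>V. t x y) = (\<Sum>x\<in>V-{v}. \<Sum>y\<in>V-{v}. t x y) + 2 * (w (g v) * D)"
    using row col by simp
  thus ?thesis unfolding t_def D_def .
qed


lemma main_bound:
  assumes sg: "simple_graph V E" and reg: "regular V E r" and r1: "r \<ge> 1"
  shows "2 * card V \<le> (r + 1) * LIF V E"
proof -
  have fin: "finite V" and sym: "\<forall>x y. E x y \<longrightarrow> E y x" and irr: "\<forall>x. \<not> E x x"
    using sg unfolding simple_graph_def by auto
  have deg: "\<forall>v\<in>V. card {u\<in>V. E v u} = r" using reg unfolding regular_def degree_def by auto
  define k where "k = (r + 1) div 2"
  have k1: "k \<ge> 1" using r1 unfolding k_def by simp
  define c :: "nat \<Rightarrow> nat" where "c i = (if i = 0 \<and> even r then 2 else 1)" for i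
  define w :: "nat \<Rightarrow> nat" where "w i = (if i = 0 \<and> even r then 2 else 3)" for i
  have wc: "w i * (c i + 1) = 6" for i unfolding w_def c_def by simp
  have wc2: "w i * c i \<le> 4" for i unfolding w_def c_def by simp
  have csum: "(\<Sum>j<k. c j + 1) = r + 1"
  proof -
    obtain k' where kk: "k = Suc k'" using k1 by (cases k) auto
    have "(\<Sum>j<k. c j + 1) = (c 0 + 1) + (\<Sum>j<k'. c (Suc j) + 1)" unfolding kk
      by (rule sum.lessThan_Suc_shift)
    also have "(\<Sum>j<k'. c (Suc j) + 1) = 2 * k'" unfolding c_def by simp
    finally have "(\<Sum>j<k. c j + 1) = (if even r then 3 else 2) + 2 * k'" unfolding c_def by simp
    moreover have "(if even r then 3 else 2) + 2 * k' = r + 1"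
      using kk unfolding k_def by (cases "even r") (auto elim!: evenE oddE)
    ultimately show ?thesis by simp
  qed
  define \<Phi> where "\<Phi> g = (\<Sum>x\<in>V. \<Sum>y\<in>V. if E x y \<and> g x = g y then w (g x) else 0)" for g :: "'a \<Rightarrow> nat"
  have "\<exists>f. (\<forall>x\<in>V. f x < k) \<and> (\<forall>g. (\<forall>x\<in>V. g x < k) \<longrightarrow> \<Phi> f \<le> \<Phi> g)"
    by (rule ex_has_least_nat[of "\<lambda>f. \<forall>x\<in>V. f x < k" "\<lambda>_. 0" \<Phi>]) (use k1 in simp)
  then obtain f where f: "\<forall>x\<in>V. f x < k" and fmin: "\<And>g. \<forall>x\<in>V. g x < k \<Longrightarrow> \<Phi> f \<le> \<Phi> g"
    by blast
  have good: "card {y\<in>V. E v y \<and> f y = f v} \<le> c (f v)" if vV: "v \<in> V" for v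
  proof (rule ccontr)
    assume "\<not> ?thesis"
    hence big: "card {y\<in>V. E v y \<and> f y = f v} \<ge> c (f v) + 1" by simp
    have "\<exists>j<k. card {y\<in>V. E v y \<and> f y = j} \<le> c j"
    proof (rule ccontr)
      assume "\<not> ?thesis"
      hence "\<forall>j<k. card {y\<in>V. E v y \<and> f y = j} \<ge> c j + 1" by auto
      hence "(\<Sum>j<k. c j + 1) \<le> (\<Sum>j<k. card {y\<in>V. E v y \<and> f y = j})" by (intro sum_mono) auto
      also have "\<dots> = card {y\<in>V. E v y}"
      proof -
        have "card {y\<in>V. E v y} = (\<Sum>j<k. card {x\<in>{y\<in>V. E v y}. f x = j})"
          by (rule card_partition_sum) (use fin f in auto)
        also have "\<dots> = (\<Sum>j<k. card {y\<in>V. E v y \<and> f y = j})"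
          by (rule sum.cong) (auto intro: arg_cong[where f=card])
        finally show ?thesis by simp
      qed
      also have "\<dots> = r" using deg vV by simp
      finally show False using csum by simp
    qed
    then obtain j where j: "j < k" "card {y\<in>V. E v y \<and> f y = j} \<le> c j" by blast
    define g where "g = f(v := j)"
    have gk: "\<forall>x\<in>V. g x < k" using f j unfolding g_def by simp
    have sf: "\<Phi> f = (\<Sum>x\<in>V-{v}. \<Sum>y\<in>V-{v}. if E x y \<and> f x = f y then w (f x) else 0)
           + 2 * (w (f v) * card {y\<in>V. E v y \<and> f y = f v})"
      unfolding \<Phi>_def by (rule phi_split[OF fin sym irr vV])
    have sg: "\<Phi> g = (\<Sum>x\<in>V-{v}. \<Sum>y\<in>V-{v}. if E x y \<and> g x = g y then w (g x) else 0)
           + 2 * (w (g v) * card {y\<in>V. E v y \<and> g y = g v})"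
      unfolding \<Phi>_def by (rule phi_split[OF fin sym irr vV])
    have rest: "(\<Sum>x\<in>V-{v}. \<Sum>y\<in>V-{v}. if E x y \<and> g x = g y then w (g x) else 0)
        = (\<Sum>x\<in>V-{v}. \<Sum>y\<in>V-{v}. if E x y \<and> f x = f y then w (f x) else 0)"
      unfolding g_def by (intro sum.cong) auto
    have dg: "{y\<in>V. E v y \<and> g y = g v} = {y\<in>V. E v y \<and> f y = j}"
      unfolding g_def using irr by auto
    have "w j * card {y\<in>V. E v y \<and> f y = j} \<le> w j * c j" using j(2) by simp
    also have "\<dots> \<le> 4" by (rule wc2)
    also have "4 < w (f v) * (c (f v) + 1)" using wc by simp
    also have "\<dots> \<le> w (f v) * card {y\<in>V. E v y \<and> f y = f v}" by (rule mult_le_mono2[OF big])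
    finally have "\<Phi> g < \<Phi> f" using sf sg rest dg unfolding g_def by simp
    thus False using fmin[OF gk] by simp
  qed
  have part: "2 * card {x\<in>V. f x = i} \<le> (c i + 1) * LIF V E" if "i < k" for i
  proof -
    let ?P = "{x\<in>V. f x = i}"
    have finP: "finite ?P" using fin by simp
    have dP: "\<forall>x\<in>?P. card {y\<in>?P. E x y} \<le> c i"
    proof
      fix x assume x: "x \<in> ?P"
      have "{y\<in>?P. E x y} = {y\<in>V. E x y \<and> f y = f x}" using x by auto
      thus "card {y\<in>?P. E x y} \<le> c i" using good[of x] x by simp
    qed
    show ?thesis
    proof (cases "c i = 1")
      case True
      have "induced_linear_forest ?P E" by (rule delta1[OF sym irr finP]) (use dP True in simp)
      hence "card ?P \<le> LIF V E" by (intro LIF_ge[OF fin]) auto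
      thus ?thesis using True by simp
    next
      case False
      hence ci: "c i = 2" unfolding c_def by (auto split: if_splits)
      have "\<forall>x\<in>?P. card {y\<in>?P. E x y} \<le> 2" using dP ci by simp
      from delta2[OF sym irr finP this] obtain S where
        S: "S \<subseteq> ?P" "induced_linear_forest S E" "2 * card ?P \<le> 3 * card S" by blast
      have "card S \<le> LIF V E" using S by (intro LIF_ge[OF fin]) auto
      thus ?thesis using S(3) ci by simp
    qed
  qed
  have "card V = (\<Sum>i<k. card {x\<in>V. f x = i})" by (rule card_partition_sum[OF fin f])
  hence "2 * card V = (\<Sum>i<k. 2 * card {x\<in>V. f x = i})" by (simp add: sum_distrib_left)
  also have "\<dots> \<le> (\<Sum>i<k. (c i + 1) * LIF V E)" by (rule sum_mono) (use part in simp)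
  also have "\<dots> = (\<Sum>i<k. c i + 1) * LIF V E" by (simp add: sum_distrib_right)
  also have "\<dots> = (r + 1) * LIF V E" using csum by simp
  finally show ?thesis .
qed


lemma part1: "\<forall>(V :: 'a set) E (r :: nat). simple_graph V E \<and> regular V E r \<and> r \<ge> 1 \<longrightarrow>
            real (LIF V E) \<ge> 2 / (real r + 1) * real (card V)"
proof (intro allI impI)
  fix V :: "'a set" and E and r :: nat
  assume h: "simple_graph V E \<and> regular V E r \<and> r \<ge> 1"
  hence "2 * card V \<le> (r + 1) * LIF V E" using main_bound by blast
  hence "real (2 * card V) \<le> real ((r + 1) * LIF V E)" by (simp only: of_nat_le_iff)
  hence ineq: "2 * real (card V) \<le> real (LIF V E) * (real r + 1)" by (simp add: algebra_simps)
  have pos: "real r + 1 > 0" by simp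
  have "2 / (real r + 1) * real (card V) = 2 * real (card V) / (real r + 1)" by simp
  also have "\<dots> \<le> real (LIF V E)" using pos_divide_le_eq[OF pos] ineq by blast
  finally show "real (LIF V E) \<ge> 2 / (real r + 1) * real (card V)" .
qed

lemma part2: "\<forall>(r :: nat) (V :: 'a set). r \<ge> 1 \<and> finite V \<and> card V = r + 1 \<longrightarrow>
            simple_graph V (\<lambda>x y. x \<in> V \<and> y \<in> V \<and> x \<noteq> y)
            \<and> regular V (\<lambda>x y. x \<in> V \<and> y \<in> V \<and> x \<noteq> y) r
            \<and> LIF V (\<lambda>x y. x \<in> V \<and> y \<in> V \<and> x \<noteq> y) = 2
            \<and> 2 / (real r + 1) * real (card V) = 2"
proof (intro allI impI)
  fix r :: nat and V :: "'a set"
  assume h: "r \<ge> 1 \<and> finite V \<and> card V = r + 1"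
  hence fin: "finite V" and cV: "card V = r + 1" and r1: "r \<ge> 1" by auto
  define K where "K = (\<lambda>x y. x \<in> V \<and> y \<in> V \<and> x \<noteq> y)"
  have sg: "simple_graph V K" unfolding simple_graph_def K_def using fin by auto
  have sym: "\<forall>x y. K x y \<longrightarrow> K y x" and irr: "\<forall>x. \<not> K x x" unfolding K_def by auto
  have reg: "regular V K r"
    unfolding regular_def degree_def
  proof
    fix v assume v: "v \<in> V"
    have "{u\<in>V. K v u} = V - {v}" unfolding K_def using v by auto
    thus "card {u\<in>V. K v u} = r" using v fin cV by simp
  qed
  have ge: "2 \<le> LIF V K"
  proof -
    have "card V \<ge> 2" using cV r1 by simp
    then obtain a where a: "a \<in> V" by fastforce
    have "card (V - {a}) \<ge> 1" using a fin \<open>card V \<ge> 2\<close> by simp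
    hence "V - {a} \<noteq> {}" by (metis card.empty not_one_le_zero)
    then obtain b where b: "b \<in> V - {a}" by blast
    have ab: "a \<noteq> b" "b \<in> V" using b by auto
    have "induced_linear_forest {a, b} K"
    proof (rule delta1[OF sym irr])
      show "\<forall>x\<in>{a, b}. card {y \<in> {a, b}. K x y} \<le> 1"
      proof
        fix x assume "x \<in> {a,b}"
        hence "{y \<in> {a, b}. K x y} = {a,b} - {x}" unfolding K_def using a ab by auto
        thus "card {y \<in> {a, b}. K x y} \<le> 1" using \<open>x \<in> {a,b}\<close> ab by auto
      qed
    qed simp
    hence "card {a,b} \<le> LIF V K" using a ab by (intro LIF_ge[OF fin]) auto
    thus ?thesis using ab by simp
  qed
  have le: "LIF V K \<le> 2"
  proof (rule LIF_le[OF fin], intro allI impI)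
    fix S assume S: "S \<subseteq> V \<and> induced_linear_forest S K"
    show "card S \<le> 2"
    proof (rule ccontr)
      assume "\<not> card S \<le> 2"
      hence c3: "card S \<ge> 3" by simp
      then obtain s where s: "s \<in> S" by fastforce
      have "component S K s = S"
      proof
        show "component S K s \<subseteq> S" by (rule comp_subset[OF s])
      next
        show "S \<subseteq> component S K s"
        proof
          fix t assume t: "t \<in> S"
          show "t \<in> component S K s"
          proof (cases "t = s")
            case True thus ?thesis by (simp add: comp_self)
          next
            case False
            hence "(s,t) \<in> rel S K" using s t S unfolding rel_def K_def by auto
            thus ?thesis unfolding component_rel by auto
          qed
        qed
      qed
      hence "is_path_graph S K" using S s unfolding induced_linear_forest_def by metis
      then obtain xs where xs: "pathlist K xs" "set xs = S" unfolding is_path_graph_iff by (elim exE conjE)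
      have dist: "distinct xs" using xs(1) unfolding pathlist_def by simp
      have len: "length xs \<ge> 3" using distinct_card[OF dist] xs(2) c3 by simp
      have "xs ! 0 \<in> S" "xs ! 2 \<in> S" using len xs(2) by (auto intro: nth_mem)
      moreover have "xs ! 0 \<noteq> xs ! 2"
      proof -
        have l0: "0 < length xs" "2 < length xs" using len by auto
        have "(xs ! 0 = xs ! 2) = ((0::nat) = 2)" by (rule nth_eq_iff_index_eq[OF dist l0])
        thus ?thesis by simp
      qed
      ultimately have "K (xs ! 0) (xs ! 2)" using S unfolding K_def by auto
      moreover have "\<not> K (xs ! 0) (xs ! 2)" using xs(1) len unfolding pathlist_def by auto
      ultimately show False by simp
    qed
  qed
  have "real (card V) = real r + 1" using cV by simp
  hence "2 / (real r + 1) * real (card V) = 2" by (simp add: field_simps)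
  thus "simple_graph V (\<lambda>x y. x \<in> V \<and> y \<in> V \<and> x \<noteq> y)
            \<and> regular V (\<lambda>x y. x \<in> V \<and> y \<in> V \<and> x \<noteq> y) r
            \<and> LIF V (\<lambda>x y. x \<in> V \<and> y \<in> V \<and> x \<noteq> y) = 2
            \<and> 2 / (real r + 1) * real (card V) = 2"
    using sg reg ge le unfolding K_def by simp
qed

theorem theorem1:
  shows "(\<forall>(V :: 'a set) E (r :: nat). simple_graph V E \<and> regular V E r \<and> r \<ge> 1 \<longrightarrow>
            real (LIF V E) \<ge> 2 / (real r + 1) * real (card V))
       \<and> (\<forall>(r :: nat) (V :: 'a set). r \<ge> 1 \<and> finite V \<and> card V = r + 1 \<longrightarrow>
            simple_graph V (\<lambda>x y. x \<in> V \<and> y \<in> V \<and> x \<noteq> y)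
            \<and> regular V (\<lambda>x y. x \<in> V \<and> y \<in> V \<and> x \<noteq> y) r
            \<and> LIF V (\<lambda>x y. x \<in> V \<and> y \<in> V \<and> x \<noteq> y) = 2
            \<and> 2 / (real r + 1) * real (card V) = 2)"
  by (rule conjI[OF part1 part2])

end
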